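(* Let $v_1,\dots,v_m\in\mathbb{C}^d$ with $m$ even, $\sum_{i=1}^m v_iv_i^*=\mathbb{I}$, $\|v_i\|^2=\alpha$ for all $i$, and $m\ge 49d^2$. Run Algorithm 2 (described in the context) on these vectors and let $A_{m/2}=\sum_{v\in\mathcal{A}_{m/2}}vv^*$ be the matrix corresponding to its output. Then \[ \log\det(\mathbb{I}-A_{m/2})\ge -d\log 2-\frac{2d^2}{m}. \]
   Context: Algorithm 2: set $A_0=\mathbf{0}_{d\times d}$, $\mathcal{A}_0=\emptyset$, $\mathcal{B}_0=\{v_1,\dots,v_m\}$. For $j=0,1,\dots,m/2-1$: choose $v_j\in\mathcal{B}_j$ minimising $v^*(\mathbb{I}-A_j)^{-1}v$ over $v\in\mathcal{B}_j$ (ties broken arbitrarily); set $A_{j+1}=A_j+v_jv_j^*$, $\mathcal{A}_{j+1}=\mathcal{A}_j\cup\{v_j\}$, $\mathcal{B}_{j+1}=\mathcal{B}_j\setminus\{v_j\}$. The output is $\mathcal{A}_{m/2}$. *)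

theory Defs
  imports "HOL-Analysis.Analysis"
begin

definition outer :: "complex ^ 'd \<Rightarrow> complex ^ 'd ^ 'd" where
  "outer v = (\<chi> i j. v $ i * cnj (v $ j))"

definition qform :: "complex ^ 'd ^ 'd \<Rightarrow> complex ^ 'd \<Rightarrow> complex" where
  "qform M v = (\<Sum>i\<in>UNIV. cnj (v $ i) * (M *v v) $ i)"

text \<open>The matrix A_j after j steps of Algorithm 2, given the sequence of chosen indices.\<close>
definition alg_A :: "(nat \<Rightarrow> complex ^ 'd) \<Rightarrow> (nat \<Rightarrow> nat) \<Rightarrow> nat \<Rightarrow> complex ^ 'd ^ 'd" where
  "alg_A v sel j = (\<Sum>k<j. outer (v (sel k)))"

text \<open>sel is a valid run of Algorithm 2 on v_0..v_{m-1} (vectors indexed, so repeated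
  vectors are handled as a multiset): at step j the chosen index is among the remaining
  ones and minimises v^*(I - A_j)^{-1} v over the remaining ones (ties arbitrary).\<close>
definition greedy_run :: "nat \<Rightarrow> (nat \<Rightarrow> complex ^ 'd) \<Rightarrow> (nat \<Rightarrow> nat) \<Rightarrow> bool" where
  "greedy_run m v sel \<longleftrightarrow>
     (\<forall>j < m div 2. sel j < m \<and> sel j \<notin> sel ` {..<j} \<and>
        (\<forall>i < m. i \<notin> sel ` {..<j} \<longrightarrow>
           Re (qform (matrix_inv (mat 1 - alg_A v sel j)) (v (sel j)))
             \<le> Re (qform (matrix_inv (mat 1 - alg_A v sel j)) (v i))))"

end

theory Submission
  imports Defs
begin


lemma mat1_rows: "(mat 1 :: 'a::comm_ring_1^'n^'n) = (\<chi> i. axis i 1)"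
  by (simp add: vec_eq_iff mat_def axis_def)

lemma row_eq: "row i A = A $ i"
  by (simp add: row_def vec_eq_iff)

lemma det_repl:
  fixes x :: "'a::field ^ 'n"
  shows "det (\<chi> i. if i = k then x else axis i 1) = x $ k"
proof -
  let ?A = "(\<chi> i. if i = k then x$k *s axis i 1 else axis i 1) :: 'a^'n^'n"
  have "det ?A = x$k * det (\<chi> i. if i = k then axis i 1 else (axis i 1::'a^'n))"
    using det_row_mul[of k "x$k" "\<lambda>i. axis i 1" "\<lambda>i. axis i 1"] by simp
  also have "(\<chi> i. if i = k then axis i 1 else (axis i 1::'a^'n)) = mat 1"
    by (simp add: mat1_rows)
  finally have dA: "det ?A = x$k" by simp
  let ?y = "(\<Sum>i\<in>-{k}. x$i *s axis i 1) :: 'a^'n"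
  have "?y \<in> vec.span {row j ?A |j. j \<noteq> k}"
  proof (rule vec.span_sum)
    fix i assume "i \<in> - {k}"
    then have "axis i 1 \<in> {row j ?A |j. j \<noteq> k}"
      by (auto simp: row_def)
    then show "x$i *s axis i 1 \<in> vec.span {row j ?A |j. j \<noteq> k}"
      by (simp add: vec.span_base vec.span_scale)
  qed
  from det_row_span[OF this]
  have "det (\<chi> i. if i = k then row k ?A + ?y else row i ?A) = x$k" using dA by simp
  moreover have "row k ?A + ?y = x"
  proof -
    have "x = (\<Sum>i\<in>UNIV. x$i *s axis i 1)"
      by (simp add: vec_eq_iff axis_def if_distrib cong: if_cong)
    also have "\<dots> = x$k *s axis k 1 + ?y"
      by (subst sum.remove[of _ k]) (auto simp: Compl_eq_Diff_UNIV)
    finally have "x = x$k *s axis k 1 + ?y" .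
    moreover have "row k ?A = x$k *s axis k 1" by (simp add: row_def vec_eq_iff)
    ultimately show ?thesis by simp
  qed
  moreover have "\<And>i. i \<noteq> k \<Longrightarrow> row i ?A = axis i 1" by (simp add: row_def vec_eq_iff)
  ultimately have "(\<chi> i. if i = k then row k ?A + ?y else row i ?A) = (\<chi> i. if i = k then x else axis i 1)"
    by (intro arg_cong[where f=vec_lambda] ext) auto
  with \<open>det (\<chi> i. if i = k then row k ?A + ?y else row i ?A) = x$k\<close> show ?thesis by simp
qed

lemma det_repl_gen:
  fixes x :: "'a::field ^ 'n"
  assumes "k \<notin> S"
  shows "det (\<chi> i. if i = k then x else if i \<in> S then axis i 1 + c i *s x else axis i 1) = x $ k"
proof -
  have "finite S" by simp
  then show ?thesis using assms
  proof (induction S rule: finite_induct)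
    case empty
    have "(\<chi> i. if i = k then x else if i \<in> {} then axis i 1 + c i *s x else axis i 1) = (\<chi> i. if i = k then x else axis i 1)"
      by (intro arg_cong[where f=vec_lambda] ext) auto
    then show ?case using det_repl[of k x] by simp
  next
    case (insert j S)
    let ?A = "(\<chi> i. if i = k then x else if i \<in> insert j S then axis i 1 + c i *s x else axis i 1) :: 'a^'n^'n"
    have jk: "j \<noteq> k" using insert.prems by blast
    have rk: "row k ?A = x" by (simp add: row_eq)
    have "- (c j *s x) \<in> vec.span {row i ?A |i. i \<noteq> j}"
    proof -
      have "row k ?A \<in> {row i ?A |i. i \<noteq> j}" using jk by blast
      then have "x \<in> {row i ?A |i. i \<noteq> j}" by (simp only: rk)
      then show ?thesis by (simp add: vec.span_base vec.span_scale vec.span_neg)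
    qed
    from det_row_span[OF this]
    have e: "det (\<chi> i. if i = j then row j ?A + - (c j *s x) else row i ?A) = det ?A" .
    have "(\<chi> i. if i = j then row j ?A + - (c j *s x) else row i ?A)
        = (\<chi> i. if i = k then x else if i \<in> S then axis i 1 + c i *s x else axis i 1)"
    proof (intro arg_cong[where f=vec_lambda] ext)
      fix i
      show "(if i = j then row j ?A + - (c j *s x) else row i ?A) =
          (if i = k then x else if i \<in> S then axis i 1 + c i *s x else axis i 1)"
      proof (cases "i = j")
        case True
        have r: "row j ?A = axis j 1 + c j *s x" using jk by (simp only: row_eq vec_lambda_beta if_False if_True insert_iff simp_thms)
        have "row j ?A + - (c j *s x) = axis j 1" unfolding r by (simp only: add.assoc add.right_inverse add.right_neutral)
        then show ?thesis using True jk insert.hyps(2) by simp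
      next
        case False
        then show ?thesis by (simp add: row_eq)
      qed
    qed
    with e insert show ?case by simp
  qed
qed

lemma det_rank1:
  fixes u w :: "'a::field ^ 'n"
  shows "det (mat 1 - (\<chi> i j. u$i * w$j)) = 1 - (\<Sum>i\<in>UNIV. w$i * u$i)"
proof (cases "w = 0")
  case True
  then have "(\<chi> i j. u$i * w$j) = (0::'a^'n^'n)" by (simp add: vec_eq_iff)
  then show ?thesis using True by simp
next
  case False
  then obtain k where wk: "w$k \<noteq> 0" by (auto simp: vec_eq_iff)
  define P where "P = (mat 1 - (\<chi> i j. u$i * w$j) :: 'a^'n^'n)"
  define s where "s = (\<Sum>i\<in>UNIV. w$i * u$i)"
  have rowP: "row i P = axis i 1 + (- u$i) *s w" for i
    by (simp add: P_def row_eq vec_eq_iff mat_def axis_def)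
  have Peq: "(\<chi> i. row i P) = P" by (simp add: row_eq vec_eq_iff)
  let ?A = "(\<chi> i. if i = k then w$k *s row i P else row i P) :: 'a^'n^'n"
  have d1: "det ?A = w$k * det P"
    using det_row_mul[of k "w$k" "\<lambda>i. row i P" "\<lambda>i. row i P"] Peq by simp
  let ?y = "(\<Sum>i\<in>-{k}. w$i *s row i P)"
  have "?y \<in> vec.span {row j ?A |j. j \<noteq> k}"
  proof (rule vec.span_sum)
    fix i assume "i \<in> - {k}"
    then have "row i P \<in> {row j ?A |j. j \<noteq> k}"
      by (auto simp: row_eq)
    then show "w$i *s row i P \<in> vec.span {row j ?A |j. j \<noteq> k}"
      by (simp add: vec.span_base vec.span_scale)
  qed
  from det_row_span[OF this]
  have d2: "det (\<chi> i. if i = k then row k ?A + ?y else row i ?A) = det ?A" .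
  have "row k ?A + ?y = (\<Sum>i\<in>UNIV. w$i *s row i P)"
  proof -
    have "row k ?A = w$k *s row k P" by (simp add: row_eq vec_eq_iff)
    moreover have "(\<Sum>i\<in>UNIV. w$i *s row i P) = w$k *s row k P + ?y"
      by (subst sum.remove[of _ k]) (auto simp: Compl_eq_Diff_UNIV)
    ultimately show ?thesis by simp
  qed
  also have "\<dots> = (1 - s) *s w"
    unfolding rowP s_def
    by (simp add: vec_eq_iff axis_def sum_distrib_left sum_subtractf algebra_simps if_distrib cong: if_cong)
  finally have ry: "row k ?A + ?y = (1 - s) *s w" .
  have "(\<chi> i. if i = k then row k ?A + ?y else row i ?A) = (\<chi> i. if i = k then (1 - s) *s w else row i P)"
    using ry by (intro arg_cong[where f=vec_lambda] ext) (auto simp: row_eq)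
  then have "det (\<chi> i. if i = k then row k ?A + ?y else row i ?A) = (1 - s) * det (\<chi> i. if i = k then w else row i P)"
    using det_row_mul[of k "1 - s" "\<lambda>i. w" "\<lambda>i. row i P"] by simp
  also have "(\<chi> i. if i = k then w else row i P) = (\<chi> i. if i = k then w else if i \<in> -{k} then axis i 1 + (- u$i) *s w else axis i 1)"
    by (intro arg_cong[where f=vec_lambda] ext) (auto simp: rowP)
  also have "det \<dots> = w$k" by (rule det_repl_gen) simp
  finally have "w$k * det P = (1 - s) * w$k" using d1 d2 by simp
  with wk have "det P = 1 - s" by simp
  then show ?thesis by (simp add: P_def s_def)
qed

lemma matrix_inv_props:
  fixes M :: "'a::field^'n^'n"
  assumes "invertible M"
  shows "M ** matrix_inv M = mat 1" "matrix_inv M ** M = mat 1"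
proof -
  have "\<exists>A'. M ** A' = mat 1 \<and> A' ** M = mat 1" using assms by (simp add: invertible_def)
  then have "M ** matrix_inv M = mat 1 \<and> matrix_inv M ** M = mat 1"
    unfolding matrix_inv_def by (rule someI_ex)
  then show "M ** matrix_inv M = mat 1" "matrix_inv M ** M = mat 1" by auto
qed

lemma matrix_sub_ldistrib': "(A::'a::comm_ring_1^'n^'m) ** (B - C) = A ** B - A ** C"
  by (vector matrix_matrix_mult_def sum_subtractf right_diff_distrib)

lemma det_update:
  fixes M :: "complex^'n^'n" and v :: "complex^'n"
  assumes "invertible M"
  shows "det (M - outer v) = det M * (1 - qform (matrix_inv M) v)"
proof -
  define N where "N = matrix_inv M"
  define u where "u = N *v v"
  define w where "w = (\<chi> j. cnj (v$j))"
  define X :: "complex^'n^'n" where "X = (\<chi> i j. u$i * w$j)"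
  have MN: "M ** N = mat 1" using matrix_inv_props[OF assms] by (simp add: N_def)
  have Mu: "M *v u = v" by (simp add: u_def matrix_vector_mul_assoc MN)
  have "M ** X = outer v"
  proof -
    have "(M ** X) $ i $ j = (M *v u) $ i * w $ j" for i j
      by (simp add: matrix_matrix_mult_def matrix_vector_mult_def X_def sum_distrib_right mult.assoc)
    then show ?thesis using Mu by (simp add: vec_eq_iff outer_def w_def)
  qed
  then have "M - outer v = M ** (mat 1 - X)" by (simp add: matrix_sub_ldistrib')
  then have "det (M - outer v) = det M * det (mat 1 - X)" by (simp add: det_mul)
  also have "det (mat 1 - X) = 1 - (\<Sum>i\<in>UNIV. w$i * u$i)" unfolding X_def by (rule det_rank1)
  also have "(\<Sum>i\<in>UNIV. w$i * u$i) = qform N v" by (simp add: qform_def w_def u_def)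
  finally show ?thesis by (simp add: N_def)
qed

lemma cnj_det: "cnj (det A) = det (\<chi> i j. cnj (A$i$j))"
  by (simp add: det_def)

lemma herm_det_real:
  fixes A :: "complex^'n^'n"
  assumes "\<And>i j. A$i$j = cnj (A$j$i)"
  shows "Im (det A) = 0"
proof -
  have "(\<chi> i j. cnj (A$i$j)) = transpose A"
    by (simp add: vec_eq_iff transpose_def) (metis assms complex_cnj_cnj)
  then have "cnj (det A) = det A" by (simp add: cnj_det)
  then show ?thesis by (metis complex_cnj_cancel_iff complex_eq_iff cnj.sel(2) neg_equal_zero)
qed

lemma trace_qform:
  fixes N :: "complex^'n^'n" and v :: "'i \<Rightarrow> complex^'n"
  shows "(\<Sum>i\<in>R. qform N (v i)) = (\<Sum>a\<in>UNIV. (N ** (\<Sum>i\<in>R. outer (v i))) $ a $ a)"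
proof -
  have "(\<Sum>i\<in>R. qform N (v i)) = (\<Sum>i\<in>R. \<Sum>a\<in>UNIV. \<Sum>b\<in>UNIV. N$a$b * (v i $ b * cnj (v i $ a)))"
    by (simp add: qform_def matrix_vector_mult_def sum_distrib_left mult_ac)
  also have "\<dots> = (\<Sum>a\<in>UNIV. \<Sum>b\<in>UNIV. \<Sum>i\<in>R. N$a$b * (v i $ b * cnj (v i $ a)))"
    by (simp add: sum.swap[of _ R] sum.swap[of _ R UNIV])
  also have "\<dots> = (\<Sum>a\<in>UNIV. (N ** (\<Sum>i\<in>R. outer (v i))) $ a $ a)"
    by (simp add: matrix_matrix_mult_def outer_def sum_distrib_left)
  finally show ?thesis .
qed



lemma ln_one_minus_lb:
  fixes x :: real
  assumes "0 \<le> x" "x \<le> 1/2"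
  shows "- x - x^2 \<le> ln (1 - x)"
proof -
  define y where "y = x + x^2"
  have y0: "0 \<le> y" using assms by (simp add: y_def)
  have e: "1 + y + y^2/2 \<le> exp y" using exp_lower_Taylor_quadratic[OF y0] .
  have x2: "x^2 \<le> x/2" using mult_left_mono[OF assms(2) assms(1)] by (simp add: power2_eq_square)
  have x3: "x^3 \<le> x^2/2" using mult_left_mono[OF assms(2), of "x^2"] by (simp add: power3_eq_cube power2_eq_square)
  have p3: "x + x^2 + x^3 \<le> 1" using x2 x3 assms by linarith
  have id: "(1 - x) * (1 + y + y^2/2) - 1 = x^2/2 * (1 - (x + x^2 + x^3))"
    unfolding y_def power2_eq_square power3_eq_cube by (simp add: field_simps)
  have "0 \<le> x^2/2 * (1 - (x + x^2 + x^3))" using p3 by simp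
  then have "1 \<le> (1 - x) * (1 + y + y^2/2)" using id by linarith
  also have "\<dots> \<le> (1 - x) * exp y" using e assms by (intro mult_left_mono) auto
  finally have "1 \<le> (1 - x) * exp y" .
  then have "ln 1 \<le> ln ((1 - x) * exp y)" by (subst ln_le_cancel_iff) auto
  also have "\<dots> = ln (1 - x) + y" using assms by (subst ln_mult) auto
  finally show ?thesis by (simp add: y_def)
qed

lemma inv_le_ln_diff:
  fixes K :: real
  assumes "K \<ge> 2"
  shows "1 / K \<le> ln K - ln (K - 1)"
proof -
  have K0: "K > 0" "K - 1 > 0" using assms by auto
  have a: "ln ((K - 1) / K) \<le> (K - 1) / K - 1" by (rule ln_le_minus_one) (use K0 in simp)
  have b: "(K - 1) / K = 1 - 1 / K" using K0 by (simp add: diff_divide_distrib)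
  have c: "ln ((K - 1) / K) = ln (K - 1) - ln K" by (rule ln_divide_pos) (use K0 in auto)
  from a b c show ?thesis by linarith
qed

lemma harm_tail:
  fixes n :: nat
  assumes "n \<ge> 1"
  shows "(\<Sum>k<n. 1 / real (2*n - k)) \<le> ln 2"
proof -
  define f where "f k = - ln (real (2*n - k))" for k
  have "(\<Sum>k<n. 1 / real (2*n - k)) \<le> (\<Sum>k<n. f (Suc k) - f k)"
  proof (rule sum_mono)
    fix k assume "k \<in> {..<n}"
    then have k: "k < n" by simp
    have e: "2*n - k = Suc (2*n - Suc k)" using k by arith
    have kk: "2*n - k \<ge> 2" using k assms by arith
    have r: "real (2*n - Suc k) = real (2*n - k) - 1" unfolding e by simp
    have "real (2*n - k) \<ge> 2" using kk by simp
    from inv_le_ln_diff[OF this]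
    show "1 / real (2*n - k) \<le> f (Suc k) - f k" unfolding f_def r by simp
  qed
  also have "\<dots> = f n - f 0" by (rule sum_lessThan_telescope)
  also have "\<dots> = ln (2 * real n) - ln (real n)" by (simp add: f_def)
  also have "\<dots> = ln 2" using assms by (simp add: ln_mult)
  finally show ?thesis .
qed

lemma numeric_bound:
  fixes n :: nat and d :: real
  assumes "d \<ge> 1" "2 * d \<le> real n"
  shows "(\<Sum>k<n. ln (1 - d / real (2*n - k))) \<ge> - d * ln 2 - d^2 / real n"
proof -
  have n1: "n \<ge> 1" using assms by linarith
  have S1: "(\<Sum>k<n. ln (1 - d / real (2*n - k))) \<ge> (\<Sum>k<n. - (d * (1 / real (2*n - k))) - d^2 / (real n)^2)"
  proof (rule sum_mono)
    fix k assume "k \<in> {..<n}"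
    then have k: "k < n" by simp
    have K: "real (2*n - k) \<ge> real n + 1" using k by linarith
    have npos: "real n > 0" using n1 by simp
    have x0: "0 \<le> d / real (2*n - k)" using assms K by simp
    have "d / real (2*n - k) \<le> d / (real n + 1)" using assms K by (intro divide_left_mono) auto
    also have "\<dots> \<le> 1/2" using assms by (simp add: field_simps)
    finally have x1: "d / real (2*n - k) \<le> 1/2" .
    have sq: "(d / real (2*n - k))^2 \<le> d^2 / (real n)^2"
    proof -
      have "d / real (2*n - k) \<le> d / real n" using assms K npos by (intro divide_left_mono) auto
      then have "(d / real (2*n - k))^2 \<le> (d / real n)^2" using x0 by (intro power_mono) auto
      then show ?thesis by (simp add: power_divide)
    qed
    have "- (d / real (2*n - k)) - (d / real (2*n - k))^2 \<le> ln (1 - d / real (2*n - k))"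
      by (rule ln_one_minus_lb[OF x0 x1])
    then show "- (d * (1 / real (2*n - k))) - d^2 / (real n)^2 \<le> ln (1 - d / real (2*n - k))"
      using sq by simp
  qed
  have S2: "(\<Sum>k<n. - (d * (1 / real (2*n - k))) - d^2 / (real n)^2) = - d * (\<Sum>k<n. 1 / real (2*n - k)) - real n * (d^2 / (real n)^2)"
    by (simp add: sum_subtractf sum_distrib_left)
  have S3: "real n * (d^2 / (real n)^2) = d^2 / real n" by (simp add: power2_eq_square)
  have S4: "- d * (\<Sum>k<n. 1 / real (2*n - k)) \<ge> - d * ln 2"
    using harm_tail[OF n1] assms by simp
  from S1 S2 S3 S4 show ?thesis by linarith
qed



theorem lemma4p1:
  fixes v :: "nat \<Rightarrow> complex ^ 'd" and m :: nat and \<alpha> :: real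
    and sel :: "nat \<Rightarrow> nat"
  assumes "even m"
    and "(\<Sum>i<m. outer (v i)) = mat 1"
    and "\<forall>i<m. (norm (v i))^2 = \<alpha>"
    and "real m \<ge> 49 * real (CARD('d))^2"
    and "greedy_run m v sel"
  shows "\<exists>r::real. det (mat 1 - alg_A v sel (m div 2)) = complex_of_real r \<and> r > 0 \<and>
           ln r \<ge> - real CARD('d) * ln 2 - 2 * real (CARD('d))^2 / real m"
proof -
  define d where "d = CARD('d)"
  define n where "n = m div 2"
  have m2: "m = 2 * n" using assms(1) by (simp add: n_def)
  have d1: "real d \<ge> 1" by (simp add: d_def)
  have "real d \<le> real d ^ 2" using d1 by (simp add: power2_eq_square)
  then have "49 * real d \<le> real m" using assms(4) unfolding d_def by linarith
  then have dn: "2 * real d \<le> real n" using m2 by simp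
  have n1: "n \<ge> 1" using dn d1 by linarith
  have G: "\<And>j. j < n \<Longrightarrow> sel j < m \<and> sel j \<notin> sel ` {..<j} \<and>
        (\<forall>i < m. i \<notin> sel ` {..<j} \<longrightarrow>
           Re (qform (matrix_inv (mat 1 - alg_A v sel j)) (v (sel j)))
             \<le> Re (qform (matrix_inv (mat 1 - alg_A v sel j)) (v i)))"
    using assms(5) unfolding greedy_run_def n_def by blast
  have inj: "inj_on sel {..<n}"
  proof (rule inj_onI)
    fix a b assume ab: "a \<in> {..<n}" "b \<in> {..<n}" "sel a = sel b"
    show "a = b"
    proof (rule ccontr)
      assume "a \<noteq> b"
      then consider "a < b" | "b < a" by linarith
      then show False
      proof cases
        case 1
        then have "sel b \<in> sel ` {..<b}" using ab(3) by (metis imageI lessThan_iff)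
        then show False using G[of b] ab by auto
      next
        case 2
        then have "sel a \<in> sel ` {..<a}" using ab(3) by (metis imageI lessThan_iff)
        then show False using G[of a] ab by auto
      qed
    qed
  qed
  define M where "M j = mat 1 - alg_A v sel j" for j
  define R where "R j = {..<m} - sel ` {..<j}" for j
  have herm: "(M j) $ a $ b = cnj ((M j) $ b $ a)" for j a b
    by (simp add: M_def alg_A_def outer_def mat_def mult.commute)
  have sumR: "(\<Sum>i\<in>R j. outer (v i)) = M j" and cardR: "card (R j) = m - j" if "j \<le> n" for j
  proof -
    have sub: "sel ` {..<j} \<subseteq> {..<m}" using G that by fastforce
    have injj: "inj_on sel {..<j}" using that by (intro inj_on_subset[OF inj]) auto
    have "(\<Sum>i<m. outer (v i)) = (\<Sum>i\<in>R j. outer (v i)) + (\<Sum>i\<in>sel ` {..<j}. outer (v i))"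
      unfolding R_def by (rule sum.subset_diff[OF sub]) simp
    also have "(\<Sum>i\<in>sel ` {..<j}. outer (v i)) = alg_A v sel j"
      unfolding alg_A_def by (subst sum.reindex[OF injj]) simp
    finally show "(\<Sum>i\<in>R j. outer (v i)) = M j" using assms(2) by (simp add: M_def)
    have "card (R j) = card {..<m} - card (sel ` {..<j})"
      unfolding R_def by (rule card_Diff_subset) (use sub in auto)
    then show "card (R j) = m - j" using card_image[OF injj] by simp
  qed
  have claim: "j \<le> n \<Longrightarrow> \<exists>r. det (M j) = complex_of_real r \<and> r > 0 \<and>
      (\<Sum>k<j. ln (1 - real d / real (2*n - k))) \<le> ln r" for j
  proof (induction j)
    case 0
    have "M 0 = mat 1" by (simp add: M_def alg_A_def)
    then show ?case by (intro exI[of _ 1]) simp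
  next
    case (Suc j)
    then have jn: "j < n" by simp
    from Suc.IH jn obtain r where r: "det (M j) = complex_of_real r" "r > 0"
      "(\<Sum>k<j. ln (1 - real d / real (2*n - k))) \<le> ln r" by auto
    have inv: "invertible (M j)" using r by (simp add: invertible_det_nz)
    define N where "N = matrix_inv (M j)"
    define q where "q = qform N (v (sel j))"
    have MS: "M (Suc j) = M j - outer (v (sel j))"
      by (simp add: M_def alg_A_def)
    have detS: "det (M (Suc j)) = complex_of_real r * (1 - q)"
      using det_update[OF inv, of "v (sel j)"] MS r by (simp add: q_def N_def)
    have "Im (det (M (Suc j))) = 0" by (rule herm_det_real) (rule herm)
    then have "r * Im q = 0" using detS by simp
    then have Imq: "Im q = 0" using r by simp
    have minq: "Re q \<le> Re (qform N (v i))" if "i \<in> R j" for i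
      using G[OF jn] that unfolding R_def q_def N_def M_def by auto
    have "(\<Sum>i\<in>R j. Re q) \<le> (\<Sum>i\<in>R j. Re (qform N (v i)))"
      by (rule sum_mono) (rule minq)
    also have "\<dots> = Re (\<Sum>i\<in>R j. qform N (v i))" by simp
    also have "(\<Sum>i\<in>R j. qform N (v i)) = (\<Sum>a\<in>UNIV. (N ** M j) $ a $ a)"
      using trace_qform[of N v "R j"] sumR[of j] jn by simp
    also have "N ** M j = mat 1" using matrix_inv_props(2)[OF inv] by (simp add: N_def)
    finally have "real (m - j) * Re q \<le> real d"
      using cardR[of j] jn by (simp add: mat_def d_def)
    moreover have mj: "real (m - j) = real (2*n - j)" using m2 by simp
    moreover have pos: "real (2*n - j) \<ge> real n + 1" using jn by linarith
    ultimately have "real (2*n - j) * Re q \<le> real d" by simp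
    then have qle: "Re q \<le> real d / real (2*n - j)" using pos by (simp add: field_simps)
    have dl: "real d / real (2*n - j) < 1" using pos dn d1 by (simp add: field_simps)
    define r' where "r' = r * (1 - Re q)"
    have qr: "q = complex_of_real (Re q)" using Imq by (simp add: complex_eq_iff)
    have "det (M (Suc j)) = complex_of_real r'"
      unfolding detS r'_def by (subst qr) simp
    moreover have r'pos: "r' > 0" using r qle dl by (simp add: r'_def)
    moreover have "(\<Sum>k<Suc j. ln (1 - real d / real (2*n - k))) \<le> ln r'"
    proof -
      have "ln (1 - real d / real (2*n - j)) \<le> ln (1 - Re q)"
        using qle dl by (subst ln_le_cancel_iff) auto
      moreover have "ln r' = ln r + ln (1 - Re q)" unfolding r'_def
        using r qle dl by (subst ln_mult) auto
      ultimately show ?thesis using r(3) by simp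
    qed
    ultimately show ?case by blast
  qed
  from claim[of n] obtain r where r: "det (M n) = complex_of_real r" "r > 0"
    "(\<Sum>k<n. ln (1 - real d / real (2*n - k))) \<le> ln r" by auto
  have "- real d * ln 2 - (real d)^2 / real n \<le> ln r"
    using numeric_bound[OF d1 dn] r(3) by linarith
  moreover have "2 * (real d)^2 / real m = (real d)^2 / real n" using m2 by simp
  ultimately show ?thesis using r unfolding M_def n_def d_def by auto
qed

end
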